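(* Let $q\in\mathbb C\setminus\{0\}$, let $\tau$ be a decorated ideal triangulation of $S$ with underlying ideal triangulation $\lambda$. The assignment $F_\tau(X_i)=q^{\delta_{\mu\nu}\sigma_{ts}}H^s_\mu H^t_\nu$, whenever the edge $\lambda_i$ bounds the $s$-side of $\tau_\mu$ and the $t$-side of $\tau_\nu$ (with $\delta$ the Kronecker delta), extends to an algebra homomorphism $F_\tau:\mathcal T^q_\lambda\to\mathcal K^q_\tau$.
   Context: Let $\bar S$ be a closed oriented surface of genus $g$, $S=\bar S\setminus\{v_1,\dots,v_p\}$, $p\ge1$, $m=2g-2+p>0$. A decorated ideal triangulation $\tau$ is an ideal triangulation $\lambda$ of $S$ (triangulation of $\bar S$ with vertex set exactly $\{v_1,\dots,v_p\}$; two sides of a triangle may lie on the same edge), with edges indexed $\lambda_1,\dots,\lambda_{3m}$, whose $2m$ triangles are numbered $\tau_1,\dots,\tau_{2m}$ and each has one marked corner. The sides of each triangle are numbered $0,1,2$ in counterclockwise order, the $0$-side being opposite the marked corner. The Kashaev algebra $\mathcal K^q_\tau$ is generated by $Y_\mu^{\pm1},Z_\mu^{\pm1}$ with relations $Y_\mu Y_\nu=Y_\nu Y_\mu$, $Z_\mu Z_\nu=Z_\nu Z_\mu$, $Y_\mu Z_\nu=Z_\nu Y_\mu$ ($\mu\ne\nu$), $Z_\mu Y_\mu=q^2Y_\mu Z_\mu$; set $H^0_\mu=Y_\mu Z_\mu^{-1}$, $H^1_\mu=Z_\mu$, $H^2_\mu=Y_\mu^{-1}$, and $\sigma_{st}$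 ($s,t\in\{0,1,2\}$) antisymmetric with $\sigma_{10}=\sigma_{02}=\sigma_{21}=1$ (when $\mu=\nu$ the formula for $F_\tau(X_i)$ does not depend on which side is called $s$). The Chekhov–Fock algebra $\mathcal T^q_\lambda$ is generated by $X_1^{\pm1},\dots,X_{3m}^{\pm1}$ with relations $X_iX_j=q^{2\sigma^\lambda_{ij}}X_jX_i$, where $\sigma^\lambda_{ij}=a^\lambda_{ij}-a^\lambda_{ji}$ and $a^\lambda_{ij}$ is the number of corners of triangles of $\lambda$ delimited on the left by $\lambda_i$ and on the right by $\lambda_j$; here a corner lying between two sides of a triangle that are consecutive in the counterclockwise order of its sides is regarded as delimited on the right by the earlier side and on the left by the later side (equivalently, each triangle whose $0,1,2$-sides lie on $\lambda_a,\lambda_b,\lambda_c$ contributes $\sigma_{st}$ to $\sigma^\lambda$ for the pair of edges on its $s$- and $t$-sides). *)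

theory Defs
  imports Complex_Main "HOL-Algebra.Ring"
begin

text \<open>Exponent vectors are functions nat => int; an element of the quantum torus with
generators X_0,...,X_{N-1} and relations X_i X_j = q^(2 eps i j) X_j X_i is a finitely
supported complex-valued function on exponent vectors supported in {..<N}.  The monomial
with exponent a stands for the ordered product X_0^(a 0) ... X_(N-1)^(a (N-1)).\<close>

definition qt_carrier :: "nat \<Rightarrow> ((nat \<Rightarrow> int) \<Rightarrow> complex) set" where
  "qt_carrier N = {f. finite {a. f a \<noteq> 0} \<and> (\<forall>a. f a \<noteq> 0 \<longrightarrow> (\<forall>i\<ge>N. a i = 0))}"

text \<open>Cocycle: moving X_j^(b j) to the left past X_i^(a i) for i > j.\<close>
definition qt_coc :: "nat \<Rightarrow> (nat \<Rightarrow> nat \<Rightarrow> int) \<Rightarrow> (nat \<Rightarrow> int) \<Rightarrow> (nat \<Rightarrow> int) \<Rightarrow> int" where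
  "qt_coc N eps a b = (\<Sum>i<N. \<Sum>j<i. 2 * eps i j * a i * b j)"

definition qt_mult :: "nat \<Rightarrow> (nat \<Rightarrow> nat \<Rightarrow> int) \<Rightarrow> complex \<Rightarrow>
    ((nat \<Rightarrow> int) \<Rightarrow> complex) \<Rightarrow> ((nat \<Rightarrow> int) \<Rightarrow> complex) \<Rightarrow> ((nat \<Rightarrow> int) \<Rightarrow> complex)" where
  "qt_mult N eps q f g = (\<lambda>a. \<Sum>(b, c) \<in> {(b, c). f b \<noteq> 0 \<and> g c \<noteq> 0 \<and> (\<lambda>k. b k + c k) = a}.
      q powi (qt_coc N eps b c) * f b * g c)"

definition qt_mono :: "(nat \<Rightarrow> int) \<Rightarrow> ((nat \<Rightarrow> int) \<Rightarrow> complex)" where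
  "qt_mono a = (\<lambda>b. if b = a then 1 else 0)"

definition qt_smult :: "complex \<Rightarrow> ((nat \<Rightarrow> int) \<Rightarrow> complex) \<Rightarrow> ((nat \<Rightarrow> int) \<Rightarrow> complex)" where
  "qt_smult c f = (\<lambda>a. c * f a)"

definition qtorus :: "nat \<Rightarrow> (nat \<Rightarrow> nat \<Rightarrow> int) \<Rightarrow> complex \<Rightarrow> ((nat \<Rightarrow> int) \<Rightarrow> complex) ring" where
  "qtorus N eps q = \<lparr> carrier = qt_carrier N, mult = qt_mult N eps q, one = qt_mono (\<lambda>_. 0),
      zero = (\<lambda>_. 0), add = (\<lambda>f g a. f a + g a) \<rparr>"

definition qt_gen :: "nat \<Rightarrow> int \<Rightarrow> ((nat \<Rightarrow> int) \<Rightarrow> complex)" where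
  "qt_gen i k = qt_mono (\<lambda>j. if j = i then k else 0)"

definition alg_hom where
  "alg_hom R S = {F. F \<in> ring_hom R S \<and> (\<forall>c. \<forall>x\<in>carrier R. F (qt_smult c x) = qt_smult c (F x))}"

text \<open>Indices are 0-based: triangles tau_0..tau_(2m-1), edges lambda_0..lambda_(3m-1).
side mu s is the index of the edge on which the s-side of triangle mu lies (s = 0,1,2,
counterclockwise, 0-side opposite the marked corner).\<close>

definition decorated_ideal_triangulation :: "nat \<Rightarrow> (nat \<Rightarrow> nat \<Rightarrow> nat) \<Rightarrow> bool" where
  "decorated_ideal_triangulation m side \<longleftrightarrow>
     0 < m \<and>
     (\<forall>mu<2*m. \<forall>s<3. side mu s < 3*m) \<and>
     (\<forall>i<3*m. card {(mu, s). mu < 2*m \<and> s < 3 \<and> side mu s = i} = 2) \<and>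
     (\<forall>mu<2*m. \<forall>nu<2*m. (mu, nu) \<in>
        {(a, b). a < 2*m \<and> b < 2*m \<and> (\<exists>s<3. \<exists>t<3. side a s = side b t)}\<^sup>*)"

text \<open>a^lambda_ij: number of corners delimited on the left by lambda_i and on the right by
lambda_j; the corner between sides s and (s+1) mod 3 has right side s, left side (s+1) mod 3.\<close>
definition corner_count :: "nat \<Rightarrow> (nat \<Rightarrow> nat \<Rightarrow> nat) \<Rightarrow> nat \<Rightarrow> nat \<Rightarrow> int" where
  "corner_count m side i j =
     int (card {(mu, s). mu < 2*m \<and> s < 3 \<and> side mu ((s + 1) mod 3) = i \<and> side mu s = j})"

definition sigma_lambda :: "nat \<Rightarrow> (nat \<Rightarrow> nat \<Rightarrow> nat) \<Rightarrow> nat \<Rightarrow> nat \<Rightarrow> int" where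
  "sigma_lambda m side i j = corner_count m side i j - corner_count m side j i"

definition sig :: "nat \<Rightarrow> nat \<Rightarrow> int" where
  "sig s t = (if (s, t) \<in> {(1,0), (0,2), (2,1)} then 1
              else if (t, s) \<in> {(1,0), (0,2), (2,1)} then -1 else 0)"

definition chekhov_fock :: "nat \<Rightarrow> (nat \<Rightarrow> nat \<Rightarrow> nat) \<Rightarrow> complex \<Rightarrow> ((nat \<Rightarrow> int) \<Rightarrow> complex) ring" where
  "chekhov_fock m side q = qtorus (3*m) (sigma_lambda m side) q"

text \<open>Kashaev algebra K^q_tau: Y_mu is generator 2 mu, Z_mu is generator 2 mu + 1;
the only nontrivial relation is Z_mu Y_mu = q^2 Y_mu Z_mu.\<close>
definition kashaev_eps :: "nat \<Rightarrow> nat \<Rightarrow> int" where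
  "kashaev_eps i j = (if even j \<and> i = j + 1 then 1 else if even i \<and> j = i + 1 then -1 else 0)"

definition kashaev :: "nat \<Rightarrow> complex \<Rightarrow> ((nat \<Rightarrow> int) \<Rightarrow> complex) ring" where
  "kashaev m q = qtorus (4*m) kashaev_eps q"

definition Yg :: "nat \<Rightarrow> int \<Rightarrow> ((nat \<Rightarrow> int) \<Rightarrow> complex)" where
  "Yg mu k = qt_gen (2*mu) k"

definition Zg :: "nat \<Rightarrow> int \<Rightarrow> ((nat \<Rightarrow> int) \<Rightarrow> complex)" where
  "Zg mu k = qt_gen (2*mu + 1) k"

definition Hg :: "nat \<Rightarrow> complex \<Rightarrow> nat \<Rightarrow> nat \<Rightarrow> ((nat \<Rightarrow> int) \<Rightarrow> complex)" where
  "Hg m q s mu = (if s = 0 then Yg mu 1 \<otimes>\<^bsub>kashaev m q\<^esub> Zg mu (-1)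
                  else if s = 1 then Zg mu 1 else Yg mu (-1))"

end

theory Submission
  imports Defs
begin


definition hc :: "nat \<Rightarrow> (nat\<Rightarrow>nat\<Rightarrow>int) \<Rightarrow> (nat\<Rightarrow>int) \<Rightarrow> int" where
  "hc N e a = (\<Sum>i<N. \<Sum>j<i. e i j * a i * a j)"
definition AA :: "nat \<Rightarrow> (nat\<Rightarrow>nat\<Rightarrow>int) \<Rightarrow> (nat\<Rightarrow>int) \<Rightarrow> (nat\<Rightarrow>int) \<Rightarrow> int" where
  "AA N e a b = (\<Sum>i<N. \<Sum>j<N. e i j * a i * b j)"
definition Lmap :: "nat \<Rightarrow> (nat \<Rightarrow> nat \<Rightarrow> int) \<Rightarrow> (nat\<Rightarrow>int) \<Rightarrow> (nat\<Rightarrow>int)" where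
  "Lmap N V a = (\<lambda>k. \<Sum>i<N. a i * V i k)"

lemma coc_diag: "qt_coc N e a a = 2 * hc N e a"
  by (simp add: qt_coc_def hc_def sum_distrib_left mult.assoc)

lemma coc_addl: "qt_coc N e (\<lambda>k. x k + y k) z = qt_coc N e x z + qt_coc N e y z"
  by (simp add: qt_coc_def algebra_simps sum.distrib)
lemma coc_addr: "qt_coc N e z (\<lambda>k. x k + y k) = qt_coc N e z x + qt_coc N e z y"
  by (simp add: qt_coc_def algebra_simps sum.distrib)

lemma hc_add: "2 * hc N e (\<lambda>k. x k + y k) = 2 * hc N e x + 2 * hc N e y + qt_coc N e x y + qt_coc N e y x"
  by (simp add: coc_diag[symmetric] coc_addl coc_addr)

lemma coc_antisym:
  assumes "\<And>i j. e i j = - e j i"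
  shows "qt_coc N e x y - qt_coc N e y x = 2 * AA N e x y"
proof (induction N)
  case 0 thus ?case by (simp add: qt_coc_def AA_def)
next
  case (Suc N)
  have e0: "e N N = 0" using assms[of N N] by simp
  define D where "D = (\<Sum>j<N. e N j * x N * y j)"
  define E where "E = (\<Sum>i<N. e i N * x i * y N)"
  have c1: "qt_coc (Suc N) e x y = qt_coc N e x y + 2 * D"
    by (simp add: qt_coc_def D_def sum_distrib_left algebra_simps)
  have c2: "qt_coc (Suc N) e y x = qt_coc N e y x - 2 * E"
    by (simp add: qt_coc_def E_def sum_distrib_left algebra_simps assms[of N] sum_negf)
  have a1: "AA (Suc N) e x y = AA N e x y + D + E"
    by (simp add: AA_def sum.distrib e0 D_def E_def algebra_simps)
  show ?case using Suc c1 c2 a1 by simp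
qed

lemma triple_prod: "(e::int) * (\<Sum>i\<in>A. f i) * (\<Sum>j\<in>B. g j) = (\<Sum>i\<in>A. \<Sum>j\<in>B. e * f i * g j)"
  by (subst mult.assoc, subst sum_product, simp add: sum_distrib_left mult.assoc)

lemma sum4_swap: "(\<Sum>k\<in>K. \<Sum>l\<in>L. \<Sum>i\<in>I. \<Sum>j\<in>J. F k l i j) = (\<Sum>i\<in>I. \<Sum>j\<in>J. \<Sum>k\<in>K. \<Sum>l\<in>L. F k l i j)"
proof -
  have "(\<Sum>k\<in>K. \<Sum>l\<in>L. \<Sum>i\<in>I. \<Sum>j\<in>J. F k l i j) = (\<Sum>k\<in>K. \<Sum>i\<in>I. \<Sum>l\<in>L. \<Sum>j\<in>J. F k l i j)"
    by (rule sum.cong[OF refl], rule sum.swap)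
  also have "\<dots> = (\<Sum>i\<in>I. \<Sum>k\<in>K. \<Sum>l\<in>L. \<Sum>j\<in>J. F k l i j)" by (rule sum.swap)
  also have "\<dots> = (\<Sum>i\<in>I. \<Sum>k\<in>K. \<Sum>j\<in>J. \<Sum>l\<in>L. F k l i j)"
    by (rule sum.cong[OF refl], rule sum.cong[OF refl], rule sum.swap)
  also have "\<dots> = (\<Sum>i\<in>I. \<Sum>j\<in>J. \<Sum>k\<in>K. \<Sum>l\<in>L. F k l i j)"
    by (rule sum.cong[OF refl], rule sum.swap)
  finally show ?thesis .
qed

lemma AA_L: "AA M e' (Lmap N V b) (Lmap N V c) = (\<Sum>i<N. \<Sum>j<N. b i * c j * AA M e' (V i) (V j))"
proof -
  have "AA M e' (Lmap N V b) (Lmap N V c) = (\<Sum>k<M. \<Sum>l<M. \<Sum>i<N. \<Sum>j<N. e' k l * (b i * V i k) * (c j * V j l))"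
    unfolding AA_def Lmap_def
    by (intro sum.cong refl) (rule triple_prod)
  also have "\<dots> = (\<Sum>i<N. \<Sum>j<N. \<Sum>k<M. \<Sum>l<M. e' k l * (b i * V i k) * (c j * V j l))"
    by (rule sum4_swap)
  also have "\<dots> = (\<Sum>i<N. \<Sum>j<N. b i * c j * AA M e' (V i) (V j))"
    by (simp add: AA_def sum_distrib_left algebra_simps)
  finally show ?thesis .
qed

definition gam :: "nat \<Rightarrow> (nat\<Rightarrow>nat\<Rightarrow>int) \<Rightarrow> nat \<Rightarrow> (nat\<Rightarrow>nat\<Rightarrow>int) \<Rightarrow> (nat \<Rightarrow> nat \<Rightarrow> int) \<Rightarrow> (nat \<Rightarrow> int) \<Rightarrow> (nat\<Rightarrow>int) \<Rightarrow> int" where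
  "gam N e M e' V lam a = hc M e' (Lmap N V a) - hc N e a + (\<Sum>i<N. a i * lam i)"

definition qhom :: "nat \<Rightarrow> (nat\<Rightarrow>nat\<Rightarrow>int) \<Rightarrow> nat \<Rightarrow> (nat\<Rightarrow>nat\<Rightarrow>int) \<Rightarrow> (nat \<Rightarrow> nat \<Rightarrow> int) \<Rightarrow> (nat \<Rightarrow> int) \<Rightarrow> complex
   \<Rightarrow> ((nat \<Rightarrow> int) \<Rightarrow> complex) \<Rightarrow> ((nat \<Rightarrow> int) \<Rightarrow> complex)" where
  "qhom N e M e' V lam q f = (\<lambda>d. \<Sum>a\<in>{a. f a \<noteq> 0}. if Lmap N V a = d then q powi gam N e M e' V lam a * f a else 0)"

lemma Lmap_add: "Lmap N V (\<lambda>k. b k + c k) = (\<lambda>k. Lmap N V b k + Lmap N V c k)"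
  by (simp add: Lmap_def algebra_simps sum.distrib)

lemma gam_cocycle:
  assumes ae: "\<And>i j. e i j = - e j i" and ae': "\<And>i j. e' i j = - e' j i"
    and comp: "\<And>i j. i < N \<Longrightarrow> j < N \<Longrightarrow> AA M e' (V i) (V j) = e i j"
  shows "gam N e M e' V lam (\<lambda>k. b k + c k) + qt_coc N e b c
     = gam N e M e' V lam b + gam N e M e' V lam c + qt_coc M e' (Lmap N V b) (Lmap N V c)"
proof -
  have AAc: "AA M e' (Lmap N V b) (Lmap N V c) = AA N e b c"
  proof -
    have "AA M e' (Lmap N V b) (Lmap N V c) = (\<Sum>i<N. \<Sum>j<N. b i * c j * e i j)"
      unfolding AA_L by (intro sum.cong refl) (simp add: comp)
    then show ?thesis by (simp add: AA_def algebra_simps)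
  qed
  note h1 = hc_add[where N=M and e=e' and x="Lmap N V b" and y="Lmap N V c"]
  note h2 = hc_add[where N=N and e=e and x=b and y=c]
  note a1 = coc_antisym[where e=e and N=N and x=b and y=c, OF ae]
  note a2 = coc_antisym[where e=e' and N=M and x="Lmap N V b" and y="Lmap N V c", OF ae']
  have l: "(\<Sum>i<N. (b i + c i) * lam i) = (\<Sum>i<N. b i * lam i) + (\<Sum>i<N. c i * lam i)"
    by (simp add: algebra_simps sum.distrib)
  show ?thesis unfolding gam_def Lmap_add l using h1 h2 a1 a2 AAc by linarith
qed

lemma qhom_sup:
  assumes "finite S" "{a. f a \<noteq> 0} \<subseteq> S"
  shows "qhom N e M e' V lam q f d = (\<Sum>a\<in>S. if Lmap N V a = d then q powi gam N e M e' V lam a * f a else 0)"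
  unfolding qhom_def by (rule sum.mono_neutral_left) (use assms in auto)

lemma mult_sup:
  assumes "finite S" "{a. f a \<noteq> 0} \<subseteq> S" "finite T" "{a. g a \<noteq> 0} \<subseteq> T"
  shows "qt_mult N e q f g a = (\<Sum>b\<in>S. \<Sum>c\<in>T. if (\<lambda>k. b k + c k) = a then q powi qt_coc N e b c * f b * g c else 0)"
proof -
  have "(\<Sum>b\<in>S. \<Sum>c\<in>T. if (\<lambda>k. b k + c k) = a then q powi qt_coc N e b c * f b * g c else 0)
     = (\<Sum>(b,c)\<in>S \<times> T. if (\<lambda>k. b k + c k) = a then q powi qt_coc N e b c * f b * g c else 0)"
    by (rule sum.cartesian_product)
  also have "\<dots> = (\<Sum>(b, c) \<in> {(b, c). f b \<noteq> 0 \<and> g c \<noteq> 0 \<and> (\<lambda>k. b k + c k) = a}.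
      q powi (qt_coc N e b c) * f b * g c)"
    by (rule sum.mono_neutral_cong_right) (use assms in \<open>auto split: if_splits\<close>)
  finally show ?thesis unfolding qt_mult_def by simp
qed


lemma supp_qhom: "{d. qhom N e M e' V lam q f d \<noteq> 0} \<subseteq> Lmap N V ` {a. f a \<noteq> 0}"
proof
  fix d assume "d \<in> {d. qhom N e M e' V lam q f d \<noteq> 0}"
  then have "qhom N e M e' V lam q f d \<noteq> 0" by simp
  then obtain a where "a \<in> {a. f a \<noteq> 0}" "(if Lmap N V a = d then q powi gam N e M e' V lam a * f a else 0) \<noteq> 0"
    unfolding qhom_def using sum.not_neutral_contains_not_neutral by blast
  then show "d \<in> Lmap N V ` {a. f a \<noteq> 0}" by (auto split: if_splits)
qed

lemma collapse2:
  assumes "finite A" "finite B" "u \<in> A" "v \<in> B"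
  shows "(\<Sum>x\<in>A. \<Sum>y\<in>B. if u = x then if v = y then (Z x y :: 'a::comm_monoid_add) else 0 else 0) = Z u v"
proof -
  have "\<And>x. (\<Sum>y\<in>B. if u = x then if v = y then Z x y else 0 else 0) = (if u = x then Z x v else 0)"
    using assms by auto
  then show ?thesis using assms by simp
qed

lemma prod_expand:
  "(X::complex) * (\<Sum>b\<in>S. if \<phi> b = y then P b else 0) * (\<Sum>c\<in>T. if \<phi> c = z then R c else 0)
   = (\<Sum>b\<in>S. \<Sum>c\<in>T. if \<phi> b = y then if \<phi> c = z then X * P b * R c else 0 else 0)"
  by (subst mult.assoc, subst sum_product, subst sum_distrib_left, rule sum.cong[OF refl],
      subst sum_distrib_left, rule sum.cong[OF refl], auto)

lemma qhom_mult:
  assumes q: "q \<noteq> 0" and ae: "\<And>i j. e i j = - e j i" and ae': "\<And>i j. e' i j = - e' j i"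
    and comp: "\<And>i j. i < N \<Longrightarrow> j < N \<Longrightarrow> AA M e' (V i) (V j) = e i j"
    and ff: "finite {a. f a \<noteq> 0}" and fg: "finite {a. g a \<noteq> 0}"
  shows "qhom N e M e' V lam q (qt_mult N e q f g) = qt_mult M e' q (qhom N e M e' V lam q f) (qhom N e M e' V lam q g)"
proof
  fix d
  let ?L = "Lmap N V" and ?G = "gam N e M e' V lam" and ?F = "qhom N e M e' V lam q"
  define Sf where "Sf = {a. f a \<noteq> 0}"
  define Sg where "Sg = {a. g a \<noteq> 0}"
  define U where "U = (\<lambda>(b,c). (\<lambda>k. b k + c k :: int)) ` (Sf \<times> Sg)"
  have fSf: "finite Sf" and fSg: "finite Sg" using ff fg by (auto simp: Sf_def Sg_def)
  have fU: "finite U" using fSf fSg by (simp add: U_def)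
  define W where "W b c = (if ?L (\<lambda>k. b k + c k) = d then q powi ?G (\<lambda>k. b k + c k) * (q powi qt_coc N e b c * f b * g c) else 0)" for b c
  have msup: "qt_mult N e q f g a = (\<Sum>b\<in>Sf. \<Sum>c\<in>Sg. if (\<lambda>k. b k + c k) = a then q powi qt_coc N e b c * f b * g c else 0)" for a
    by (rule mult_sup) (use fSf fSg in \<open>auto simp: Sf_def Sg_def\<close>)
  have suppU: "{a. qt_mult N e q f g a \<noteq> 0} \<subseteq> U"
  proof
    fix a assume "a \<in> {a. qt_mult N e q f g a \<noteq> 0}"
    then have "(\<Sum>b\<in>Sf. \<Sum>c\<in>Sg. if (\<lambda>k. b k + c k) = a then q powi qt_coc N e b c * f b * g c else 0) \<noteq> 0"
      using msup by simp
    then obtain b where b: "b \<in> Sf" "(\<Sum>c\<in>Sg. if (\<lambda>k. b k + c k) = a then q powi qt_coc N e b c * f b * g c else 0) \<noteq> 0"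
      using sum.not_neutral_contains_not_neutral by blast
    then obtain c where c: "c \<in> Sg" "(if (\<lambda>k. b k + c k) = a then q powi qt_coc N e b c * f b * g c else 0) \<noteq> 0"
      using sum.not_neutral_contains_not_neutral by blast
    then show "a \<in> U" using b unfolding U_def by (auto split: if_splits)
  qed
  have "?F (qt_mult N e q f g) d = (\<Sum>a\<in>U. if ?L a = d then q powi ?G a * qt_mult N e q f g a else 0)"
    by (rule qhom_sup[OF fU suppU])
  also have "\<dots> = (\<Sum>a\<in>U. \<Sum>b\<in>Sf. \<Sum>c\<in>Sg. if (\<lambda>k. b k + c k) = a then W b c else 0)"
  proof (rule sum.cong[OF refl])
    fix a
    have "(if ?L a = d then q powi ?G a * qt_mult N e q f g a else 0)
       = (\<Sum>b\<in>Sf. \<Sum>c\<in>Sg. if ?L a = d then q powi ?G a * (if (\<lambda>k. b k + c k) = a then q powi qt_coc N e b c * f b * g c else 0) else 0)"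
      by (simp add: msup sum_distrib_left)
    also have "\<dots> = (\<Sum>b\<in>Sf. \<Sum>c\<in>Sg. if (\<lambda>k. b k + c k) = a then W b c else 0)"
      by (intro sum.cong refl) (auto simp: W_def)
    finally show "(if ?L a = d then q powi ?G a * qt_mult N e q f g a else 0) = \<dots>" .
  qed
  also have "\<dots> = (\<Sum>b\<in>Sf. \<Sum>c\<in>Sg. \<Sum>a\<in>U. if (\<lambda>k. b k + c k) = a then W b c else 0)"
    by (subst sum.swap, rule sum.cong[OF refl], rule sum.swap)
  also have "\<dots> = (\<Sum>b\<in>Sf. \<Sum>c\<in>Sg. W b c)"
    by (intro sum.cong refl) (use fU in \<open>auto simp: U_def\<close>)
  finally have lhs: "?F (qt_mult N e q f g) d = (\<Sum>b\<in>Sf. \<Sum>c\<in>Sg. W b c)" .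
  define Z where "Z b' c' = (\<lambda>b c. if (\<lambda>k. b' k + c' k) = d then q powi qt_coc M e' b' c' * (q powi ?G b * f b) * (q powi ?G c * g c) else 0)" for b' c'
  have sF: "{a. ?F f a \<noteq> 0} \<subseteq> ?L ` Sf" "{a. ?F g a \<noteq> 0} \<subseteq> ?L ` Sg"
    using supp_qhom Sf_def Sg_def by blast+
  have Ff: "?F f b' = (\<Sum>b\<in>Sf. if ?L b = b' then q powi ?G b * f b else 0)" for b'
    by (simp add: qhom_def Sf_def)
  have Fg: "?F g b' = (\<Sum>b\<in>Sg. if ?L b = b' then q powi ?G b * g b else 0)" for b'
    by (simp add: qhom_def Sg_def)
  have "qt_mult M e' q (?F f) (?F g) d = (\<Sum>b'\<in>?L ` Sf. \<Sum>c'\<in>?L ` Sg. if (\<lambda>k. b' k + c' k) = d then q powi qt_coc M e' b' c' * ?F f b' * ?F g c' else 0)"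
    by (rule mult_sup) (use fSf fSg sF in auto)
  also have "\<dots> = (\<Sum>b'\<in>?L ` Sf. \<Sum>c'\<in>?L ` Sg. \<Sum>b\<in>Sf. \<Sum>c\<in>Sg. if ?L b = b' then if ?L c = c' then Z b' c' b c else 0 else 0)"
  proof (intro sum.cong refl)
    fix b' c'
    show "(if (\<lambda>k. b' k + c' k) = d then q powi qt_coc M e' b' c' * ?F f b' * ?F g c' else 0) =
      (\<Sum>b\<in>Sf. \<Sum>c\<in>Sg. if ?L b = b' then if ?L c = c' then Z b' c' b c else 0 else 0)"
    proof (cases "(\<lambda>k. b' k + c' k) = d")
      case True
      show ?thesis unfolding Ff Fg prod_expand Z_def if_P[OF True] by (simp add: mult.assoc)
    next
      case False
      show ?thesis unfolding Z_def if_not_P[OF False] by (simp only: if_cancel sum.neutral_const)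
    qed
  qed
  also have "\<dots> = (\<Sum>b\<in>Sf. \<Sum>c\<in>Sg. \<Sum>b'\<in>?L ` Sf. \<Sum>c'\<in>?L ` Sg. if ?L b = b' then if ?L c = c' then Z b' c' b c else 0 else 0)"
    by (rule sum4_swap)
  also have "\<dots> = (\<Sum>b\<in>Sf. \<Sum>c\<in>Sg. Z (?L b) (?L c) b c)"
    by (intro sum.cong refl collapse2) (use fSf fSg in auto)
  also have "\<dots> = (\<Sum>b\<in>Sf. \<Sum>c\<in>Sg. W b c)"
  proof (intro sum.cong refl)
    fix b c
    note cc = gam_cocycle[where b=b and c=c and lam=lam, OF ae ae' comp]
    have "q powi ?G (\<lambda>k. b k + c k) * q powi qt_coc N e b c = q powi (?G (\<lambda>k. b k + c k) + qt_coc N e b c)"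
      by (simp add: power_int_add q)
    also have "\<dots> = q powi (?G b + ?G c + qt_coc M e' (?L b) (?L c))" by (simp only: cc)
    also have "\<dots> = q powi ?G b * q powi ?G c * q powi qt_coc M e' (?L b) (?L c)"
      by (simp add: power_int_add q)
    finally have "q powi ?G (\<lambda>k. b k + c k) * q powi qt_coc N e b c = q powi ?G b * q powi ?G c * q powi qt_coc M e' (?L b) (?L c)" .
    then show "Z (?L b) (?L c) b c = W b c"
      unfolding Z_def W_def Lmap_add by (simp add: algebra_simps)
  qed
  finally show "?F (qt_mult N e q f g) d = qt_mult M e' q (?F f) (?F g) d" using lhs by simp
qed


lemma qhom_add:
  assumes ff: "finite {a. f a \<noteq> 0}" and fg: "finite {a. g a \<noteq> 0}"
  shows "qhom N e M e' V lam q (\<lambda>a. f a + g a) = (\<lambda>d. qhom N e M e' V lam q f d + qhom N e M e' V lam q g d)"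
proof
  fix d
  let ?S = "{a. f a \<noteq> 0} \<union> {a. g a \<noteq> 0}"
  have fS: "finite ?S" using ff fg by simp
  have 1: "qhom N e M e' V lam q (\<lambda>a. f a + g a) d = (\<Sum>a\<in>?S. if Lmap N V a = d then q powi gam N e M e' V lam a * (f a + g a) else 0)"
    by (rule qhom_sup[OF fS]) auto
  have 2: "qhom N e M e' V lam q f d = (\<Sum>a\<in>?S. if Lmap N V a = d then q powi gam N e M e' V lam a * f a else 0)"
    by (rule qhom_sup[OF fS]) auto
  have 3: "qhom N e M e' V lam q g d = (\<Sum>a\<in>?S. if Lmap N V a = d then q powi gam N e M e' V lam a * g a else 0)"
    by (rule qhom_sup[OF fS]) auto
  show "qhom N e M e' V lam q (\<lambda>a. f a + g a) d = qhom N e M e' V lam q f d + qhom N e M e' V lam q g d"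
    unfolding 1 2 3 sum.distrib[symmetric] by (intro sum.cong refl) (simp add: algebra_simps)
qed

lemma qhom_smult:
  assumes ff: "finite {a. f a \<noteq> 0}"
  shows "qhom N e M e' V lam q (qt_smult c f) = qt_smult c (qhom N e M e' V lam q f)"
proof
  fix d
  have 1: "qhom N e M e' V lam q (qt_smult c f) d = (\<Sum>a\<in>{a. f a \<noteq> 0}. if Lmap N V a = d then q powi gam N e M e' V lam a * qt_smult c f a else 0)"
    by (rule qhom_sup[OF ff]) (auto simp: qt_smult_def)
  show "qhom N e M e' V lam q (qt_smult c f) d = qt_smult c (qhom N e M e' V lam q f) d"
  proof -
    have "qt_smult c (qhom N e M e' V lam q f) d = (\<Sum>a\<in>{a. f a \<noteq> 0}. c * (if Lmap N V a = d then q powi gam N e M e' V lam a * f a else 0))"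
      by (simp only: qt_smult_def qhom_def sum_distrib_left)
    also have "\<dots> = (\<Sum>a\<in>{a. f a \<noteq> 0}. if Lmap N V a = d then q powi gam N e M e' V lam a * qt_smult c f a else 0)"
      by (intro sum.cong refl) (simp add: qt_smult_def)
    finally show ?thesis using 1 by simp
  qed
qed


lemma qhom_mono: "qhom N e M e' V lam q (qt_mono a) = qt_smult (q powi gam N e M e' V lam a) (qt_mono (Lmap N V a))"
proof -
  have s: "{b. qt_mono a b \<noteq> 0} = {a}" by (auto simp: qt_mono_def)
  show ?thesis
  proof (rule ext)
    fix d
    have "qhom N e M e' V lam q (qt_mono a) d = (if Lmap N V a = d then q powi gam N e M e' V lam a * qt_mono a a else 0)"
      unfolding qhom_def s by (simp only: sum.insert finite.emptyI empty_iff not_False_eq_True sum.empty add_0_right)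
    then show "qhom N e M e' V lam q (qt_mono a) d = qt_smult (q powi gam N e M e' V lam a) (qt_mono (Lmap N V a)) d"
      by (simp add: qt_smult_def qt_mono_def eq_commute[of d])
  qed
qed

lemma qhom_one: "qhom N e M e' V lam q (qt_mono (\<lambda>_. 0)) = qt_mono (\<lambda>_. 0)"
proof -
  have L0: "Lmap N V (\<lambda>_. 0) = (\<lambda>_. 0)" by (simp add: Lmap_def)
  have g0: "gam N e M e' V lam (\<lambda>_. 0) = 0" by (simp add: gam_def L0 hc_def)
  show ?thesis unfolding qhom_mono L0 g0 by (simp add: qt_smult_def)
qed

lemma qhom_carrier:
  assumes f: "f \<in> qt_carrier N" and supV: "\<And>i k. i < N \<Longrightarrow> M \<le> k \<Longrightarrow> V i k = 0"
  shows "qhom N e M e' V lam q f \<in> qt_carrier M"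
proof -
  have ff: "finite {a. f a \<noteq> 0}" and fs: "\<And>a i. f a \<noteq> 0 \<Longrightarrow> N \<le> i \<Longrightarrow> a i = 0"
    using f by (auto simp: qt_carrier_def)
  have "finite {d. qhom N e M e' V lam q f d \<noteq> 0}"
    by (rule finite_subset[OF supp_qhom]) (use ff in simp)
  moreover have "\<forall>i\<ge>M. d i = 0" if "qhom N e M e' V lam q f d \<noteq> 0" for d
  proof -
    have "d \<in> Lmap N V ` {a. f a \<noteq> 0}" using supp_qhom[of N e M e' V lam q f] that by auto
    then obtain a where "f a \<noteq> 0" "d = Lmap N V a" by auto
    then show ?thesis using supV by (simp add: Lmap_def)
  qed
  ultimately show ?thesis by (auto simp: qt_carrier_def)
qed

lemma qhom_alg_hom:
  assumes q: "q \<noteq> 0" and ae: "\<And>i j. e i j = - e j i" and ae': "\<And>i j. e' i j = - e' j i"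
    and comp: "\<And>i j. i < N \<Longrightarrow> j < N \<Longrightarrow> AA M e' (V i) (V j) = e i j"
    and supV: "\<And>i k. i < N \<Longrightarrow> M \<le> k \<Longrightarrow> V i k = 0"
  shows "qhom N e M e' V lam q \<in> alg_hom (qtorus N e q) (qtorus M e' q)"
proof -
  have fin: "finite {a. f a \<noteq> 0}" if "f \<in> qt_carrier N" for f
    using that by (simp add: qt_carrier_def)
  have "qhom N e M e' V lam q \<in> ring_hom (qtorus N e q) (qtorus M e' q)"
  proof (rule ring_hom_memI)
    fix x assume "x \<in> carrier (qtorus N e q)"
    then show "qhom N e M e' V lam q x \<in> carrier (qtorus M e' q)"
      by (simp add: qtorus_def qhom_carrier[OF _ supV])
  next
    fix x y assume "x \<in> carrier (qtorus N e q)" "y \<in> carrier (qtorus N e q)"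
    then have x: "x \<in> qt_carrier N" and y: "y \<in> qt_carrier N" by (simp_all add: qtorus_def)
    show "qhom N e M e' V lam q (x \<otimes>\<^bsub>qtorus N e q\<^esub> y) = qhom N e M e' V lam q x \<otimes>\<^bsub>qtorus M e' q\<^esub> qhom N e M e' V lam q y"
      unfolding qtorus_def by (simp add: qhom_mult[OF q ae ae' comp fin[OF x] fin[OF y]])
    show "qhom N e M e' V lam q (x \<oplus>\<^bsub>qtorus N e q\<^esub> y) = qhom N e M e' V lam q x \<oplus>\<^bsub>qtorus M e' q\<^esub> qhom N e M e' V lam q y"
      unfolding qtorus_def by (simp add: qhom_add[OF fin[OF x] fin[OF y]])
  next
    show "qhom N e M e' V lam q \<one>\<^bsub>qtorus N e q\<^esub> = \<one>\<^bsub>qtorus M e' q\<^esub>"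
      unfolding qtorus_def by (simp add: qhom_one)
  qed
  moreover have "\<forall>c. \<forall>x\<in>carrier (qtorus N e q). qhom N e M e' V lam q (qt_smult c x) = qt_smult c (qhom N e M e' V lam q x)"
  proof (intro allI ballI)
    fix c x assume "x \<in> carrier (qtorus N e q)"
    then have "x \<in> qt_carrier N" by (simp add: qtorus_def)
    then show "qhom N e M e' V lam q (qt_smult c x) = qt_smult c (qhom N e M e' V lam q x)"
      by (rule qhom_smult[OF fin])
  qed
  ultimately show ?thesis unfolding alg_hom_def by blast
qed



definition hvec :: "nat \<Rightarrow> nat \<Rightarrow> nat \<Rightarrow> int" where
  "hvec mu s = (\<lambda>k. if s = 0 then (if k = 2*mu then 1 else if k = 2*mu+1 then -1 else 0)
     else if s = 1 then (if k = 2*mu+1 then 1 else 0) else (if k = 2*mu then -1 else 0))"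

definition Pset :: "nat \<Rightarrow> (nat \<Rightarrow> nat \<Rightarrow> nat) \<Rightarrow> nat \<Rightarrow> (nat \<times> nat) set" where
  "Pset m side i = {(mu, s). mu < 2*m \<and> s < 3 \<and> side mu s = i}"

definition Vv :: "nat \<Rightarrow> (nat \<Rightarrow> nat \<Rightarrow> nat) \<Rightarrow> nat \<Rightarrow> nat \<Rightarrow> int" where
  "Vv m side i = (\<lambda>k. \<Sum>p\<in>Pset m side i. hvec (fst p) (snd p) k)"

definition lamv :: "nat \<Rightarrow> (nat \<Rightarrow> nat \<Rightarrow> nat) \<Rightarrow> nat \<Rightarrow> int" where
  "lamv m side i = - (\<Sum>p\<in>Pset m side i. hc (4*m) kashaev_eps (hvec (fst p) (snd p)))"

lemma sum_two:
  assumes "Suc a < (M::nat)" "\<And>k. k \<noteq> a \<Longrightarrow> k \<noteq> Suc a \<Longrightarrow> f k = (0::int)"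
  shows "(\<Sum>k<M. f k) = f a + f (Suc a)"
proof -
  have "(\<Sum>k<M. f k) = (\<Sum>k\<in>{a, Suc a}. f k)"
    by (rule sum.mono_neutral_right) (use assms in auto)
  then show ?thesis by simp
qed

lemma AA_h:
  assumes "mu < 2*m" "nu < 2*m" "s < 3" "t < 3"
  shows "AA (4*m) kashaev_eps (hvec mu s) (hvec nu t) = (if mu = nu then sig s t else 0)"
proof -
  have i: "(\<Sum>l<4*m. kashaev_eps k l * x * hvec nu t l) =
      kashaev_eps k (2*nu) * x * hvec nu t (2*nu) + kashaev_eps k (Suc (2*nu)) * x * hvec nu t (Suc (2*nu))" for k x
    by (rule sum_two) (use assms in \<open>auto simp: hvec_def\<close>)
  have "AA (4*m) kashaev_eps (hvec mu s) (hvec nu t) =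
     (\<Sum>l<4*m. kashaev_eps (2*mu) l * hvec mu s (2*mu) * hvec nu t l) + (\<Sum>l<4*m. kashaev_eps (Suc (2*mu)) l * hvec mu s (Suc (2*mu)) * hvec nu t l)"
    unfolding AA_def by (rule sum_two) (use assms in \<open>auto simp: hvec_def\<close>)
  also have "\<dots> = (if mu = nu then sig s t else 0)"
    unfolding i using assms
    by (cases "mu = nu"; cases s; cases t) (auto simp: hvec_def kashaev_eps_def sig_def numeral_3_eq_3 less_Suc_eq)
  finally show ?thesis .
qed


lemma sum_grid:
  fixes A B :: nat
  shows "(\<Sum>p\<in>{(mu, s). mu < A \<and> s < B \<and> Q mu s}. f p) = (\<Sum>mu<A. \<Sum>s<B. if Q mu s then f (mu, s) else (0::'a::comm_monoid_add))"
proof -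
  have e: "{(mu, s). mu < A \<and> s < B \<and> Q mu s} = {p \<in> {..<A} \<times> {..<B}. Q (fst p) (snd p)}" by auto
  have "(\<Sum>mu<A. \<Sum>s<B. if Q mu s then f (mu, s) else 0) = (\<Sum>(mu,s)\<in>{..<A} \<times> {..<B}. if Q mu s then f (mu, s) else 0)"
    by (rule sum.cartesian_product)
  also have "\<dots> = (\<Sum>p\<in>{..<A} \<times> {..<B}. if Q (fst p) (snd p) then f p else 0)"
    by (simp add: split_def cong: if_cong)
  also have "\<dots> = (\<Sum>p\<in>{p \<in> {..<A} \<times> {..<B}. Q (fst p) (snd p)}. f p)"
    by (rule sum.inter_filter[symmetric]) (intro finite_cartesian_product finite_lessThan)
  finally show ?thesis unfolding e by simp
qed

lemma card_grid:
  fixes A B :: nat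
  shows "int (card {(mu, s). mu < A \<and> s < B \<and> Q mu s}) = (\<Sum>mu<A. \<Sum>s<B. if Q mu s then 1 else 0)"
  unfolding card_eq_sum of_nat_sum sum_grid by (simp add: of_nat_sum if_distrib cong: if_cong)

lemma sum3: "(\<Sum>s<(3::nat). f s) = f 0 + f 1 + f 2"
proof -
  have "{..<3::nat} = {0,1,2}" by auto
  then show ?thesis by (simp add: algebra_simps)
qed

lemma sigv: "sig 0 0 = 0" "sig 0 1 = -1" "sig 0 2 = 1" "sig 1 0 = 1" "sig 1 1 = 0" "sig 1 2 = -1"
  "sig 2 0 = -1" "sig 2 1 = 1" "sig 2 2 = 0"
  by (simp_all add: sig_def)

lemma sigma_expand:
  "sigma_lambda m side i j = (\<Sum>mu<2*m. \<Sum>s<3. \<Sum>t<3. if side mu s = i \<and> side mu t = j then sig s t else 0)"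
proof -
  have "sigma_lambda m side i j = (\<Sum>mu<2*m. (\<Sum>s<3. if side mu ((s+1) mod 3) = i \<and> side mu s = j then 1 else 0)
     - (\<Sum>s<3. if side mu ((s+1) mod 3) = j \<and> side mu s = i then 1 else 0))"
    unfolding sigma_lambda_def corner_count_def card_grid sum_subtractf ..
  also have "\<dots> = (\<Sum>mu<2*m. \<Sum>s<3. \<Sum>t<3. if side mu s = i \<and> side mu t = j then sig s t else 0)"
  proof (rule sum.cong[OF refl])
    fix mu
    show "(\<Sum>s<3. if side mu ((s+1) mod 3) = i \<and> side mu s = j then 1 else 0)
     - (\<Sum>s<3. if side mu ((s+1) mod 3) = j \<and> side mu s = i then 1 else 0) =
     (\<Sum>s<3. \<Sum>t<3. if side mu s = i \<and> side mu t = j then sig s t else (0::int))"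
      unfolding sum3 sigv
      by (cases "side mu 0 = i"; cases "side mu 1 = i"; cases "side mu 2 = i";
          cases "side mu 0 = j"; cases "side mu 1 = j"; cases "side mu 2 = j"; simp add: numeral_2_eq_2)
  qed
  finally show ?thesis .
qed

lemma AA_V:
  assumes "i < 3*m" "j < 3*m"
  shows "AA (4*m) kashaev_eps (Vv m side i) (Vv m side j) = sigma_lambda m side i j"
proof -
  have "AA (4*m) kashaev_eps (Vv m side i) (Vv m side j) =
     (\<Sum>p\<in>Pset m side i. \<Sum>p'\<in>Pset m side j. AA (4*m) kashaev_eps (hvec (fst p) (snd p)) (hvec (fst p') (snd p')))"
  proof -
    have "AA (4*m) kashaev_eps (Vv m side i) (Vv m side j) = (\<Sum>k<4*m. \<Sum>l<4*m. \<Sum>p\<in>Pset m side i. \<Sum>p'\<in>Pset m side j.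
       kashaev_eps k l * hvec (fst p) (snd p) k * hvec (fst p') (snd p') l)"
      unfolding AA_def Vv_def by (intro sum.cong refl) (rule triple_prod)
    also have "\<dots> = (\<Sum>p\<in>Pset m side i. \<Sum>p'\<in>Pset m side j. \<Sum>k<4*m. \<Sum>l<4*m.
       kashaev_eps k l * hvec (fst p) (snd p) k * hvec (fst p') (snd p') l)"
      by (rule sum4_swap)
    finally show ?thesis unfolding AA_def .
  qed
  also have "\<dots> = (\<Sum>p\<in>Pset m side i. \<Sum>p'\<in>Pset m side j. if fst p = fst p' then sig (snd p) (snd p') else 0)"
    by (intro sum.cong refl) (auto simp: Pset_def AA_h)
  also have "\<dots> = (\<Sum>mu<2*m. \<Sum>s<3. if side mu s = i then (\<Sum>nu<2*m. \<Sum>t<3. if side nu t = j then (if mu = nu then sig s t else 0) else 0) else 0)"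
    unfolding Pset_def sum_grid by (simp only: fst_conv snd_conv)
  also have "\<dots> = (\<Sum>mu<2*m. \<Sum>s<3. \<Sum>t<3. if side mu s = i \<and> side mu t = j then sig s t else 0)"
  proof (intro sum.cong refl)
    fix mu s assume mu: "mu \<in> {..<2*m}"
    have "(\<Sum>nu<2*m. \<Sum>t<3. if side nu t = j then (if mu = nu then sig s t else 0) else 0)
        = (\<Sum>nu<2*m. if mu = nu then (\<Sum>t<3. if side mu t = j then sig s t else 0) else 0)"
      by (intro sum.cong refl) (auto cong: if_cong)
    also have "\<dots> = (\<Sum>t<3. if side mu t = j then sig s t else 0)" using mu by (simp cong: if_cong)
    finally show "(if side mu s = i then (\<Sum>nu<2*m. \<Sum>t<3. if side nu t = j then (if mu = nu then sig s t else 0) else 0) else 0)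
       = (\<Sum>t<3. if side mu s = i \<and> side mu t = j then sig s t else 0)" by auto
  qed
  finally show ?thesis using sigma_expand by simp
qed


lemma mono_mult: "qt_mult N e q (qt_mono a) (qt_mono b) = qt_smult (q powi qt_coc N e a b) (qt_mono (\<lambda>k. a k + b k))"
proof (rule ext)
  fix d
  have s: "{(b', c'). qt_mono a b' \<noteq> 0 \<and> qt_mono b c' \<noteq> 0 \<and> (\<lambda>k. b' k + c' k) = d}
      = (if (\<lambda>k. a k + b k) = d then {(a, b)} else {})"
    by (auto simp: qt_mono_def)
  show "qt_mult N e q (qt_mono a) (qt_mono b) d = qt_smult (q powi qt_coc N e a b) (qt_mono (\<lambda>k. a k + b k)) d"
    unfolding qt_mult_def s by (auto simp: qt_smult_def qt_mono_def)
qed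

lemma Hg_mono:
  assumes "s < 3"
  shows "Hg m q s mu = qt_mono (hvec mu s)"
proof -
  consider "s = 0" | "s = 1" | "s = 2" using assms by linarith
  then show ?thesis
  proof cases
    case 1
    have c: "qt_coc (4*m) kashaev_eps (\<lambda>j. if j = 2*mu then 1 else 0) (\<lambda>j. if j = 2*mu+1 then -1 else 0) = 0"
      unfolding qt_coc_def by (intro sum.neutral ballI) auto
    have "(\<lambda>k. (if k = 2*mu then 1 else 0) + (if k = 2*mu+1 then -1 else 0)) = hvec mu 0"
      by (auto simp: hvec_def)
    then show ?thesis using 1 c
      by (simp add: Hg_def kashaev_def qtorus_def Yg_def Zg_def qt_gen_def mono_mult qt_smult_def)
  next
    case 2 then show ?thesis
      by (simp add: Hg_def Zg_def qt_gen_def hvec_def)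
  next
    case 3 then show ?thesis
      by (simp add: Hg_def Yg_def qt_gen_def hvec_def)
  qed
qed

lemma two_elem:
  assumes "card A = 2" "x \<in> A" "y \<in> A" "x \<noteq> y"
  shows "A = {x, y}"
proof -
  have f: "finite A" using assms(1) card.infinite by fastforce
  have "{x, y} \<subseteq> A" using assms by auto
  moreover have "card {x, y} = card A" using assms by simp
  ultimately show ?thesis using card_subset_eq[OF f] by metis
qed

lemma qt_smult_smult: "qt_smult a (qt_smult b X) = qt_smult (a * b) X"
  by (simp add: qt_smult_def mult.assoc)

theorem lemma5p2:
  fixes m :: nat and side :: "nat \<Rightarrow> nat \<Rightarrow> nat" and q :: complex
  assumes "q \<noteq> 0"
    and "decorated_ideal_triangulation m side"
  shows "\<exists>F. F \<in> alg_hom (chekhov_fock m side q) (kashaev m q) \<and>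
    (\<forall>i<3*m. \<forall>mu<2*m. \<forall>nu<2*m. \<forall>s<3. \<forall>t<3.
       (mu, s) \<noteq> (nu, t) \<and> side mu s = i \<and> side nu t = i \<longrightarrow>
       F (qt_gen i 1) =
         qt_smult (q powi (if mu = nu then sig t s else 0))
           (Hg m q s mu \<otimes>\<^bsub>kashaev m q\<^esub> Hg m q t nu))"
proof -
  have cardP: "\<And>i. i < 3*m \<Longrightarrow> card (Pset m side i) = 2"
    using assms(2) unfolding decorated_ideal_triangulation_def Pset_def by blast
  define F where "F = qhom (3*m) (sigma_lambda m side) (4*m) kashaev_eps (Vv m side) (lamv m side) q"
  have ae: "\<And>i j. sigma_lambda m side i j = - sigma_lambda m side j i" by (simp add: sigma_lambda_def)
  have ae': "\<And>i j. kashaev_eps i j = - kashaev_eps j i" by (auto simp: kashaev_eps_def)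
  have supV: "Vv m side i k = 0" if "i < 3*m" "4*m \<le> k" for i k
    unfolding Vv_def by (intro sum.neutral ballI) (use that in \<open>auto simp: Pset_def hvec_def\<close>)
  have hom: "F \<in> alg_hom (chekhov_fock m side q) (kashaev m q)"
    unfolding F_def chekhov_fock_def kashaev_def
    by (rule qhom_alg_hom[OF assms(1) ae ae' AA_V supV])
  have val: "F (qt_gen i 1) = qt_smult (q powi (if mu = nu then sig t s else 0))
           (Hg m q s mu \<otimes>\<^bsub>kashaev m q\<^esub> Hg m q t nu)"
    if i: "i < 3*m" and mu: "mu < 2*m" and nu: "nu < 2*m" and s: "s < 3" and t: "t < 3"
      and ne: "(mu, s) \<noteq> (nu, t)" and si: "side mu s = i" and ti: "side nu t = i" for i mu nu s t
  proof -
    let ?hs = "hvec mu s" and ?ht = "hvec nu t"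
    let ?hc' = "hc (4*m) kashaev_eps"
    have P: "Pset m side i = {(mu, s), (nu, t)}"
      by (rule two_elem[OF cardP[OF i]]) (use mu nu s t si ti ne in \<open>auto simp: Pset_def\<close>)
    have V: "Vv m side i = (\<lambda>k. ?hs k + ?ht k)"
      unfolding Vv_def P using ne by auto
    have lam: "lamv m side i = - (?hc' ?hs + ?hc' ?ht)"
      unfolding lamv_def P using ne by auto
    define dl where "dl = (\<lambda>j. if j = i then 1 else (0::int))"
    have gen: "qt_gen i 1 = qt_mono dl" by (simp add: qt_gen_def dl_def)
    have Ld: "Lmap (3*m) (Vv m side) dl = Vv m side i"
    proof (rule ext)
      fix k
      have "Lmap (3*m) (Vv m side) dl k = (\<Sum>j<3*m. if i = j then Vv m side j k else 0)"
        unfolding Lmap_def dl_def by (intro sum.cong refl) auto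
      then show "Lmap (3*m) (Vv m side) dl k = Vv m side i k" using i by simp
    qed
    have hd: "hc (3*m) (sigma_lambda m side) dl = 0"
      unfolding hc_def dl_def by (intro sum.neutral ballI) auto
    have ld: "(\<Sum>j<3*m. dl j * lamv m side j) = lamv m side i"
    proof -
      have "(\<Sum>j<3*m. dl j * lamv m side j) = (\<Sum>j<3*m. if i = j then lamv m side j else 0)"
        unfolding dl_def by (intro sum.cong refl) auto
      then show ?thesis using i by simp
    qed
    have gd: "gam (3*m) (sigma_lambda m side) (4*m) kashaev_eps (Vv m side) (lamv m side) dl
        = ?hc' (\<lambda>k. ?hs k + ?ht k) - (?hc' ?hs + ?hc' ?ht)"
      unfolding gam_def Ld hd ld V lam by simp
    note h1 = hc_add[where N="4*m" and e=kashaev_eps and x="?hs" and y="?ht"]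
    note a1 = coc_antisym[where e=kashaev_eps and N="4*m" and x="?hs" and y="?ht", OF ae']
    have aa: "AA (4*m) kashaev_eps ?hs ?ht = (if mu = nu then sig s t else 0)" by (rule AA_h[OF mu nu s t])
    have sst: "sig t s = - sig s t" by (simp add: sig_def)
    have ex: "?hc' (\<lambda>k. ?hs k + ?ht k) - (?hc' ?hs + ?hc' ?ht)
        = (if mu = nu then sig t s else 0) + qt_coc (4*m) kashaev_eps ?hs ?ht"
      using h1 a1 aa sst by (cases "mu = nu") auto
    have "F (qt_gen i 1) = qt_smult (q powi ((if mu = nu then sig t s else 0) + qt_coc (4*m) kashaev_eps ?hs ?ht))
          (qt_mono (\<lambda>k. ?hs k + ?ht k))"
      unfolding F_def gen qhom_mono Ld gd ex V ..
    also have "\<dots> = qt_smult (q powi (if mu = nu then sig t s else 0))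
           (Hg m q s mu \<otimes>\<^bsub>kashaev m q\<^esub> Hg m q t nu)"
      by (simp add: Hg_mono[OF s] Hg_mono[OF t] kashaev_def qtorus_def mono_mult qt_smult_smult
          power_int_add assms(1))
    finally show ?thesis .
  qed
  show ?thesis using hom val by blast
qed


end
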